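(* Let $m\ge 2$ be an integer, let $\lambda_1,\dots,\lambda_m>0$, and let $X_1,\dots,X_m$ be independent random variables with $X_i\sim\mathrm{Pois}(\lambda_i)$. For $n\ge1$ define $p_n^{(m)}=\mathbb{P}(X_1\cdots X_m\ge n)$. Then, as $n\to\infty$, \[ p_n^{(m)}=(2\pi)^{(m-1)/2}\,n^{(m-1)/(2m)}\exp\bigl(-n^{1/m}\log n+O(n^{1/m})\bigr), \] and in particular $\log p_n^{(m)}=-n^{1/m}\log n+O(n^{1/m})$.
   Context: $\log$ denotes the natural logarithm. $\mathrm{Pois}(\lambda)$ is the Poisson distribution with mean $\lambda$. *)

theory Defs
  imports "HOL-Probability.Probability" "HOL-Library.Landau_Symbols"
begin

text \<open>Joint law of independent X_0,...,X_(m-1) with X_i ~ Pois(lam i), as a product pmf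
  on functions nat => nat (value 0 outside {..<m}).  p_n^(m) = P(X_1 ... X_m >= n).\<close>
definition pois_prod_tail :: "nat \<Rightarrow> (nat \<Rightarrow> real) \<Rightarrow> nat \<Rightarrow> real" where
  "pois_prod_tail m lam n =
     measure_pmf.prob (Pi_pmf {..<m} 0 (\<lambda>i. poisson_pmf (lam i)))
       {x. (\<Prod>i<m. x i) \<ge> n}"

end

theory Submission
  imports Defs
begin

lemma tangent_ineq:
  fixes x N a :: real
  assumes "x > 0" "N > 0" "ln N \<ge> a - 1"
  shows "x * ln x - a * x \<ge> N * ln N - a * N + N * (ln N - a + 1) * (ln x - ln N)"
proof -
  define r where "r = x / N"
  define u where "u = ln x - ln N"
  define B where "B = N * (ln N - a + 1)"
  have r0: "r > 0" using assms by (simp add: r_def)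
  have u: "u = ln r" using assms by (simp add: r_def u_def ln_div)
  have x: "x = r * N" using assms by (simp add: r_def)
  have B0: "B \<ge> 0" using assms by (simp add: B_def)
  have h1: "r - 1 - u \<ge> 0" using ln_le_minus_one[OF r0] u by simp
  have h2: "r * u - r + 1 \<ge> 0"
  proof -
    have "ln (1/r) \<le> 1/r - 1" using r0 by (intro ln_le_minus_one) simp
    hence "- u \<le> 1/r - 1" using r0 u by (simp add: ln_div)
    hence "r * (-u) \<le> r * (1/r - 1)" using r0 by (intro mult_left_mono) auto
    thus ?thesis using r0 by (simp add: algebra_simps)
  qed
  have lnx: "ln x = ln N + u" by (simp add: u_def)
  have "x * (ln N + u) - a * x - (N * ln N - a * N + B * u) = B * (r - 1 - u) + N * (r * u - r + 1)"
    unfolding x B_def by (simp add: algebra_simps)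
  hence "x * ln x - a * x - (N * ln N - a * N + B * u) = B * (r - 1 - u) + N * (r * u - r + 1)"
    by (simp only: lnx)
  also have "\<dots> \<ge> 0" using B0 h1 h2 assms by simp
  finally show ?thesis by (simp add: B_def u_def)
qed

lemma pow_fact_le_exp:
  fixes x :: real assumes "x \<ge> 0"
  shows "x ^ k / fact k \<le> exp x"
proof -
  have s: "(\<lambda>n. x^n / fact n) sums exp x" using exp_converges[of x] by (simp add: divide_inverse mult.commute scaleR_conv_of_real)
  have "(\<Sum>n\<in>{k}. x^n / fact n) \<le> suminf (\<lambda>n. x^n / fact n)"
    by (rule sum_le_suminf) (use s assms in \<open>auto simp: sums_iff\<close>)
  thus ?thesis using s by (simp add: sums_iff)
qed

lemma sum_lower:
  fixes y :: "nat \<Rightarrow> nat" and n m :: nat and a :: real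
  assumes "m \<ge> 1" "n \<ge> 1" "(\<Prod>i<m. y i) \<ge> n"
    and "ln (real n powr (1 / real m)) \<ge> a - 1"
  shows "(\<Sum>i<m. real (y i) * ln (real (y i)) - a * real (y i))
           \<ge> real n powr (1 / real m) * ln (real n) - a * real m * real n powr (1 / real m)"
proof -
  define N where "N = real n powr (1 / real m)"
  have N0: "N > 0" using assms by (simp add: N_def)
  have lnN: "real m * ln N = ln (real n)" using assms by (simp add: N_def ln_powr)
  have ypos: "real (y i) > 0" if "i < m" for i
  proof (rule ccontr)
    assume "\<not> real (y i) > 0"
    hence "y i = 0" by simp
    hence "(\<Prod>i<m. y i) = 0" using that by (intro prod_zero) auto
    thus False using assms(2,3) by linarith
  qed
  define B where "B = N * (ln N - a + 1)"
  have B0: "B \<ge> 0" using assms N0 by (simp add: B_def N_def)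
  have "(\<Sum>i<m. ln (real (y i))) = ln (\<Prod>i<m. real (y i))"
    using ypos by (subst ln_prod) auto
  also have "\<dots> \<ge> ln (real n)"
  proof -
    have "real n \<le> (\<Prod>i<m. real (y i))" using assms(3) by (metis of_nat_le_iff of_nat_prod)
    thus ?thesis using assms by (subst ln_le_cancel_iff) auto
  qed
  finally have sl: "(\<Sum>i<m. ln (real (y i))) \<ge> ln (real n)" .
  have "(\<Sum>i<m. real (y i) * ln (real (y i)) - a * real (y i))
      \<ge> (\<Sum>i<m. N * ln N - a * N + B * (ln (real (y i)) - ln N))"
    using tangent_ineq[OF ypos N0] assms unfolding B_def N_def by (intro sum_mono) auto
  also have "(\<Sum>i<m. N * ln N - a * N + B * (ln (real (y i)) - ln N))
     = real m * (N * ln N - a * N) + B * ((\<Sum>i<m. ln (real (y i))) - real m * ln N)"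
    by (simp add: sum.distrib sum_subtractf sum_distrib_left algebra_simps)
  also have "\<dots> \<ge> real m * (N * ln N - a * N)"
    using B0 sl lnN by (simp add: mult_nonneg_nonneg)
  finally show ?thesis using lnN unfolding N_def[symmetric] by (simp add: algebra_simps)
qed

lemma pois_term_bound:
  fixes lam a :: real
  assumes "lam > 0" "ln lam \<le> a - 2"
  shows "pmf (poisson_pmf lam) k * exp (real k * ln (real k) - a * real k) \<le> exp (-1) ^ k"
proof -
  have kk: "exp (real k * ln (real k)) = real k ^ k"
  proof (cases "k = 0")
    case False
    hence "exp (real k * ln (real k)) = real k powr real k" by (simp add: powr_def mult.commute)
    thus ?thesis using False by (simp add: powr_realpow)
  qed simp
  have f: "real k ^ k / fact k \<le> exp (real k)" by (rule pow_fact_le_exp) simp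
  have lk: "lam ^ k = exp (real k * ln lam)" using assms by (simp add: exp_of_nat_mult)
  have "pmf (poisson_pmf lam) k * exp (real k * ln (real k) - a * real k)
      = lam ^ k * (real k ^ k / fact k) * exp (-lam) * exp (- a * real k)"
    using assms by (simp add: exp_diff kk field_simps exp_minus)
  also have "\<dots> \<le> lam ^ k * exp (real k) * 1 * exp (- a * real k)"
    using assms f by (intro mult_mono) auto
  also have "\<dots> = exp (real k * (ln lam + 1 - a))" unfolding lk
    by (simp add: exp_add[symmetric] algebra_simps)
  also have "\<dots> \<le> exp (real k * (-1))" using assms by (subst exp_le_cancel_iff, intro mult_left_mono) auto
  also have "\<dots> = exp (-1) ^ k" by (simp add: exp_of_nat_mult[symmetric])
  finally show ?thesis .
qed

lemma pois_nn_bound: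
  fixes lam a :: real
  assumes "lam > 0" "ln lam \<le> a - 2"
  shows "(\<integral>\<^sup>+k. ennreal (exp (real k * ln (real k) - a * real k)) \<partial>measure_pmf (poisson_pmf lam))
           \<le> ennreal (1 / (1 - exp (-1)))"
proof -
  have "(\<integral>\<^sup>+k. ennreal (exp (real k * ln (real k) - a * real k)) \<partial>measure_pmf (poisson_pmf lam))
     = (\<integral>\<^sup>+k. ennreal (pmf (poisson_pmf lam) k) * ennreal (exp (real k * ln (real k) - a * real k)) \<partial>count_space UNIV)"
    by (rule nn_integral_measure_pmf)
  also have "\<dots> \<le> (\<integral>\<^sup>+k. ennreal (exp (-1) ^ k) \<partial>count_space UNIV)"
  proof (intro nn_integral_mono)
    fix k :: nat
    show "ennreal (pmf (poisson_pmf lam) k) * ennreal (exp (real k * ln (real k) - a * real k)) \<le> ennreal (exp (-1) ^ k)"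
      using pois_term_bound[OF assms, of k] by (simp add: ennreal_mult[symmetric] ennreal_leI)
  qed
  also have "\<dots> = (\<Sum>k. ennreal (exp (-1) ^ k))" by (rule nn_integral_count_space_nat)
  also have "\<dots> = ennreal (\<Sum>k. exp (-1) ^ k)"
    by (rule suminf_ennreal2) (auto intro: summable_geometric)
  also have "(\<Sum>k. exp (-1::real) ^ k) = 1 / (1 - exp (-1))"
    by (rule suminf_geometric) simp
  finally show ?thesis by simp
qed

lemma upper_bound:
  fixes m n :: nat and lam :: "nat \<Rightarrow> real" and a :: real
  assumes "m \<ge> 1" "\<And>i. i < m \<Longrightarrow> lam i > 0"
    and "a = 2 + (\<Sum>i<m. \<bar>ln (lam i)\<bar>)" "n \<ge> 1"
    and "ln (real n powr (1 / real m)) \<ge> a - 1"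
  shows "pois_prod_tail m lam n \<le>
    exp (- (real n powr (1 / real m) * ln (real n) - a * real m * real n powr (1 / real m)))
      * (1 / (1 - exp (-1))) ^ m"
proof -
  define M where "M = Pi_pmf {..<m} 0 (\<lambda>i. poisson_pmf (lam i))"
  define A where "A = {x::nat\<Rightarrow>nat. (\<Prod>i<m. x i) \<ge> n}"
  define T where "T = real n powr (1 / real m) * ln (real n) - a * real m * real n powr (1 / real m)"
  define h where "h = (\<lambda>k::nat. exp (real k * ln (real k) - a * real k))"
  define K where "K = 1 / (1 - exp (-1::real))"
  have K0: "K \<ge> 0" unfolding K_def by simp
  have la: "ln (lam i) \<le> a - 2" if "i < m" for i
  proof -
    have "\<bar>ln (lam i)\<bar> \<le> (\<Sum>i<m. \<bar>ln (lam i)\<bar>)"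
      by (rule member_le_sum) (use that in auto)
    thus ?thesis using assms(3) by linarith
  qed
  have "ennreal (pois_prod_tail m lam n) = emeasure (measure_pmf M) A"
    unfolding pois_prod_tail_def M_def A_def by (simp add: measure_pmf.emeasure_eq_measure)
  also have "\<dots> = (\<integral>\<^sup>+x. indicator A x \<partial>measure_pmf M)" by simp
  also have "\<dots> \<le> (\<integral>\<^sup>+x. ennreal (exp (-T)) * (\<Prod>i<m. ennreal (h (x i))) \<partial>measure_pmf M)"
  proof (intro nn_integral_mono)
    fix x :: "nat \<Rightarrow> nat"
    show "indicator A x \<le> ennreal (exp (-T)) * (\<Prod>i<m. ennreal (h (x i)))"
    proof (cases "x \<in> A")
      case True
      have s: "(\<Sum>i<m. real (x i) * ln (real (x i)) - a * real (x i)) \<ge> T"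
        unfolding T_def by (rule sum_lower) (use assms True in \<open>auto simp: A_def\<close>)
      have "(\<Prod>i<m. ennreal (h (x i))) = ennreal (\<Prod>i<m. h (x i))"
        by (rule prod_ennreal) (simp add: h_def)
      also have "(\<Prod>i<m. h (x i)) = exp (\<Sum>i<m. real (x i) * ln (real (x i)) - a * real (x i))"
        by (simp add: h_def exp_sum)
      finally have "ennreal (exp (-T)) * (\<Prod>i<m. ennreal (h (x i)))
          = ennreal (exp ((\<Sum>i<m. real (x i) * ln (real (x i)) - a * real (x i)) - T))"
        by (simp add: ennreal_mult[symmetric] exp_diff field_simps exp_minus)
      also have "\<dots> \<ge> ennreal 1" using s by (intro ennreal_leI) simp
      finally show ?thesis using True by simp
    qed simp
  qed
  also have "\<dots> = ennreal (exp (-T)) * (\<integral>\<^sup>+x. (\<Prod>i<m. ennreal (h (x i))) \<partial>measure_pmf M)"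
    by (rule nn_integral_cmult) simp
  also have "(\<integral>\<^sup>+x. (\<Prod>i<m. ennreal (h (x i))) \<partial>measure_pmf M)
      = (\<Prod>i<m. \<integral>\<^sup>+k. ennreal (h k) \<partial>measure_pmf (poisson_pmf (lam i)))"
    unfolding M_def by (rule nn_integral_prod_Pi_pmf) simp
  also have "\<dots> \<le> (\<Prod>i<m. ennreal K)"
    by (intro prod_mono_ennreal) (use pois_nn_bound assms(2) la in \<open>auto simp: h_def K_def\<close>)
  also have "(\<Prod>i<m. ennreal K) = ennreal (K ^ m)" using K0 by (simp add: ennreal_power)
  finally have "ennreal (pois_prod_tail m lam n) \<le> ennreal (exp (-T) * K ^ m)"
    by (simp add: ennreal_mult[symmetric] mult_left_mono K0)
  hence "pois_prod_tail m lam n \<le> exp (-T) * K ^ m"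
    using K0 by (subst (asm) ennreal_le_iff) auto
  thus ?thesis unfolding T_def K_def .
qed

lemma lower_bound:
  fixes m n :: nat and lam :: "nat \<Rightarrow> real"
  assumes "m \<ge> 1" "\<And>i. i < m \<Longrightarrow> lam i > 0" "n \<ge> 1"
  defines "k \<equiv> nat \<lceil>real n powr (1 / real m)\<rceil>"
  shows "pois_prod_tail m lam n \<ge> (\<Prod>i<m. lam i ^ k / fact k * exp (- lam i))"
proof -
  define N where "N = real n powr (1 / real m)"
  define M where "M = Pi_pmf {..<m} 0 (\<lambda>i. poisson_pmf (lam i))"
  define A where "A = {x::nat\<Rightarrow>nat. (\<Prod>i<m. x i) \<ge> n}"
  define x0 where "x0 = (\<lambda>i::nat. if i < m then k else 0)"
  have N0: "N \<ge> 0" by (simp add: N_def)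
  have kN: "real k \<ge> N" unfolding k_def N_def[symmetric] using N0 by linarith
  have "real n = N ^ m" unfolding N_def using assms by (simp add: powr_realpow[symmetric] powr_powr)
  also have "\<dots> \<le> real k ^ m" using kN N0 by (intro power_mono) auto
  finally have "n \<le> k ^ m" by (metis of_nat_le_iff of_nat_power)
  hence "x0 \<in> A" by (simp add: A_def x0_def)
  hence "measure_pmf.prob M {x0} \<le> measure_pmf.prob M A"
    by (intro measure_pmf.finite_measure_mono) auto
  moreover have "measure_pmf.prob M {x0} = (\<Prod>i<m. pmf (poisson_pmf (lam i)) k)"
    unfolding measure_pmf_single M_def by (subst pmf_Pi') (auto simp: x0_def)
  ultimately show ?thesis using assms(2)
    by (simp add: pois_prod_tail_def M_def A_def)
qed

lemma klnk_bound:
  fixes N :: real and k m :: nat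
  assumes "N \<ge> 1" "N \<le> real k" "real k \<le> N + 1"
  shows "real m * (real k * ln (real k)) \<le> real m * (N * ln N) + 3 * real m * N"
proof -
  have k1: "real k \<ge> 1" using assms by linarith
  have e: "1 + 1 / N = (N + 1) / N" using assms by (simp add: field_simps)
  have "ln (N + 1) - ln N = ln (1 + 1 / N)" unfolding e using assms
    by (subst ln_div) auto
  also have "\<dots> \<le> 1 / N" using assms by (intro ln_add_one_self_le_self) auto
  finally have l1: "ln (real k) \<le> ln N + 1 / N"
    using assms k1 by (smt (verit) ln_le_cancel_iff)
  have lk0: "ln (real k) \<ge> 0" using k1 by simp
  have lN: "ln N \<le> N" using assms by (smt (verit) ln_le_minus_one)
  have lN0: "ln N \<ge> 0" using assms by simp
  have "real k * ln (real k) \<le> (N + 1) * (ln N + 1 / N)"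
    using assms lk0 l1 by (intro mult_mono) auto
  also have "\<dots> = N * ln N + ln N + 1 + 1 / N" using assms by (simp add: field_simps)
  also have "\<dots> \<le> N * ln N + 3 * N"
  proof -
    have "1 / N \<le> 1" using assms by simp
    thus ?thesis using assms lN by linarith
  qed
  finally have "real k * ln (real k) \<le> N * ln N + 3 * N" .
  hence "real m * (real k * ln (real k)) \<le> real m * (N * ln N + 3 * N)"
    by (rule mult_left_mono) simp
  thus ?thesis by (simp add: distrib_left)
qed

lemma log_lower:
  fixes m n :: nat and lam :: "nat \<Rightarrow> real"
  assumes "m \<ge> 1" "\<And>i. i < m \<Longrightarrow> lam i > 0" "n \<ge> 1"
  shows "pois_prod_tail m lam n > 0 \<and>
    ln (pois_prod_tail m lam n) + real n powr (1 / real m) * ln (real n)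
      \<ge> - (2 * (\<Sum>i<m. \<bar>ln (lam i)\<bar>) + 3 * real m + (\<Sum>i<m. lam i)) * real n powr (1 / real m)"
proof -
  define N where "N = real n powr (1 / real m)"
  define k where "k = nat \<lceil>N\<rceil>"
  define S where "S = (\<Sum>i<m. \<bar>ln (lam i)\<bar>)"
  define L where "L = (\<Sum>i<m. lam i)"
  have N1: "N \<ge> 1" using assms by (simp add: N_def ge_one_powr_ge_zero)
  have kN: "real k \<ge> N" "real k \<le> N + 1" unfolding k_def using N1 by linarith+
  have k1: "k \<ge> 1" using kN N1 by linarith
  have S0: "S \<ge> 0" by (simp add: S_def sum_nonneg)
  have lnn: "real m * ln N = ln (real n)" using assms by (simp add: N_def ln_powr)
  define Q where "Q = (\<Prod>i<m. lam i ^ k / fact k * exp (- lam i))"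
  have PQ: "pois_prod_tail m lam n \<ge> Q" unfolding Q_def k_def N_def by (rule lower_bound[OF assms])
  have pos: "lam i ^ k / fact k * exp (- lam i) > 0" if "i \<in> {..<m}" for i
  proof -
    have l: "lam i > 0" using assms(2) that by auto
    have "lam i ^ k > 0" using l by simp
    thus "lam i ^ k / fact k * exp (- lam i) > 0" by simp
  qed
  have nz: "\<And>i. i \<in> {..<m} \<Longrightarrow> lam i ^ k / fact k * exp (- lam i) \<noteq> 0"
    using pos by (metis less_irrefl)
  have Q0: "Q > 0" unfolding Q_def using pos by (intro prod_pos) auto
  have "ln Q = (\<Sum>i<m. ln (lam i ^ k / fact k * exp (- lam i)))"
    unfolding Q_def by (rule ln_prod[OF finite_lessThan nz])
  also have "\<dots> = (\<Sum>i<m. real k * ln (lam i) - ln (fact k) - lam i)"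
  proof (intro sum.cong refl)
    fix i assume "i \<in> {..<m}"
    hence l: "lam i > 0" using assms(2) by auto
    have "lam i ^ k > 0" using l by simp
    thus "ln (lam i ^ k / fact k * exp (- lam i)) = real k * ln (lam i) - ln (fact k) - lam i"
      using l by (simp add: ln_mult ln_div ln_realpow)
  qed
  also have "\<dots> \<ge> (\<Sum>i<m. - real k * \<bar>ln (lam i)\<bar> - real k * ln (real k) - lam i)"
  proof (intro sum_mono)
    fix i
    have "ln (fact k :: real) \<le> ln (real k ^ k)"
      using fact_le_power[of k, where 'a=real] k1 by (subst ln_le_cancel_iff) auto
    also have "\<dots> = real k * ln (real k)" using k1 by (simp add: ln_realpow)
    finally have "ln (fact k :: real) \<le> real k * ln (real k)" .
    moreover have "- real k * \<bar>ln (lam i)\<bar> \<le> real k * ln (lam i)"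
    proof -
      have "- \<bar>ln (lam i)\<bar> \<le> ln (lam i)" by arith
      hence "real k * (- \<bar>ln (lam i)\<bar>) \<le> real k * ln (lam i)" by (rule mult_left_mono) simp
      thus ?thesis by simp
    qed
    ultimately show "- real k * \<bar>ln (lam i)\<bar> - real k * ln (real k) - lam i
        \<le> real k * ln (lam i) - ln (fact k) - lam i" by linarith
  qed
  also have "(\<Sum>i<m. - real k * \<bar>ln (lam i)\<bar> - real k * ln (real k) - lam i)
      = - real k * S - real m * (real k * ln (real k)) - L"
    by (simp add: S_def L_def sum_subtractf sum_distrib_left sum_negf)
  finally have lQ: "ln Q \<ge> - real k * S - real m * (real k * ln (real k)) - L" .
  have f1: "real k * S \<le> 2 * N * S" using kN N1 S0 by (intro mult_right_mono) auto
  have f2: "real m * (real k * ln (real k)) \<le> real m * (N * ln N) + 3 * real m * N"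
    by (rule klnk_bound) (use N1 kN in auto)
  have L0: "L \<ge> 0" using assms(2) unfolding L_def by (intro sum_nonneg) (auto intro: less_imp_le)
  have f3: "L \<le> L * N" using mult_left_mono[OF N1 L0] by simp
  have f4: "ln (pois_prod_tail m lam n) \<ge> ln Q" using PQ Q0 by simp
  have f5: "N * ln (real n) = real m * (N * ln N)" using lnn by simp
  have f6: "- (2 * S + 3 * real m + L) * N = - (2 * N * S) - 3 * real m * N - L * N"
    by (simp add: algebra_simps)
  have X: "ln (pois_prod_tail m lam n) + N * ln (real n) \<ge> - (2 * S + 3 * real m + L) * N"
    using f1 f2 f3 f4 f5 f6 lQ by linarith
  show ?thesis unfolding N_def[symmetric] S_def[symmetric] L_def[symmetric]
    using X PQ Q0 by auto
qed

lemma log_upper: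
  fixes m n :: nat and lam :: "nat \<Rightarrow> real" and a :: real
  assumes "m \<ge> 1" "\<And>i. i < m \<Longrightarrow> lam i > 0"
    and "a = 2 + (\<Sum>i<m. \<bar>ln (lam i)\<bar>)" "n \<ge> 1"
    and "ln (real n powr (1 / real m)) \<ge> a - 1"
  shows "ln (pois_prod_tail m lam n) + real n powr (1 / real m) * ln (real n)
     \<le> (a * real m + real m * ln (1 / (1 - exp (-1)))) * real n powr (1 / real m)"
proof -
  define N where "N = real n powr (1 / real m)"
  define K where "K = 1 / (1 - exp (-1::real))"
  define T where "T = N * ln (real n) - a * real m * N"
  have K1: "K \<ge> 1" unfolding K_def by (simp add: field_simps)
  have lK: "ln K \<ge> 0" using K1 by simp
  have N1: "N \<ge> 1" using assms by (simp add: N_def ge_one_powr_ge_zero)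
  have a0: "a \<ge> 0" using assms(3) by (simp add: sum_nonneg add_nonneg_nonneg)
  have P0: "pois_prod_tail m lam n > 0" using log_lower[of m lam n] assms(1,2,4) by blast
  have PU: "pois_prod_tail m lam n \<le> exp (-T) * K ^ m"
    using upper_bound[OF assms] unfolding T_def K_def N_def .
  have "ln (pois_prod_tail m lam n) \<le> ln (exp (-T) * K ^ m)"
    using P0 PU by (subst ln_le_cancel_iff) auto
  also have "\<dots> = -T + real m * ln K" using K1 by (simp add: ln_mult ln_realpow)
  finally have "ln (pois_prod_tail m lam n) + N * ln (real n) \<le> a * real m * N + real m * ln K"
    unfolding T_def by simp
  also have "real m * ln K \<le> real m * ln K * N" using N1 lK
    using mult_left_mono[OF N1, of "real m * ln K"] by simp
  finally show ?thesis unfolding N_def[symmetric] K_def[symmetric] by (simp add: algebra_simps)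
qed

lemma log_bigo:
  fixes m :: nat and lam :: "nat \<Rightarrow> real"
  assumes "m \<ge> 1" "\<And>i. i < m \<Longrightarrow> lam i > 0"
  shows "\<exists>C. \<forall>\<^sub>F n in at_top. pois_prod_tail m lam n > 0 \<and>
     \<bar>ln (pois_prod_tail m lam n) + real n powr (1 / real m) * ln (real n)\<bar> \<le> C * real n powr (1 / real m)"
proof -
  define a where "a = 2 + (\<Sum>i<m. \<bar>ln (lam i)\<bar>)"
  define C1 where "C1 = 2 * (\<Sum>i<m. \<bar>ln (lam i)\<bar>) + 3 * real m + (\<Sum>i<m. lam i)"
  define C2 where "C2 = a * real m + real m * ln (1 / (1 - exp (-1::real)))"
  have ev1: "\<forall>\<^sub>F n in at_top. (n::nat) \<ge> 1" by (rule eventually_ge_at_top)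
  have "filterlim (\<lambda>n::nat. ln (real n)) at_top at_top"
    by (rule filterlim_compose[OF ln_at_top filterlim_real_sequentially])
  hence ev2: "\<forall>\<^sub>F n in at_top. ln (real n) \<ge> real m * (a - 1)"
    by (simp add: filterlim_at_top)
  have "\<forall>\<^sub>F n in at_top. pois_prod_tail m lam n > 0 \<and>
     \<bar>ln (pois_prod_tail m lam n) + real n powr (1 / real m) * ln (real n)\<bar> \<le> max C1 C2 * real n powr (1 / real m)"
    using ev1 ev2
  proof eventually_elim
    case (elim n)
    have N0: "real n powr (1 / real m) \<ge> 0" by simp
    have "ln (real n powr (1 / real m)) = ln (real n) / real m" using assms by simp
    also have "\<dots> \<ge> a - 1" using elim assms by (simp add: field_simps)
    finally have lnN: "ln (real n powr (1 / real m)) \<ge> a - 1" .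
    have U: "ln (pois_prod_tail m lam n) + real n powr (1 / real m) * ln (real n) \<le> C2 * real n powr (1 / real m)"
      unfolding C2_def by (rule log_upper[OF assms a_def elim(1) lnN])
    have L: "pois_prod_tail m lam n > 0 \<and> ln (pois_prod_tail m lam n) + real n powr (1 / real m) * ln (real n) \<ge> - C1 * real n powr (1 / real m)"
      unfolding C1_def using log_lower[of m lam n] assms elim(1) by simp
    have "C2 * real n powr (1 / real m) \<le> max C1 C2 * real n powr (1 / real m)"
      using N0 by (intro mult_right_mono) auto
    moreover have "C1 * real n powr (1 / real m) \<le> max C1 C2 * real n powr (1 / real m)"
      using N0 by (intro mult_right_mono) auto
    ultimately show ?case using U L by (auto simp: abs_le_iff)
  qed
  thus ?thesis by blast
qed

theorem theorem4:
  fixes m :: nat and lam :: "nat \<Rightarrow> real"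
  assumes "m \<ge> 2"
    and "\<And>i. i < m \<Longrightarrow> lam i > 0"
  shows "(\<exists>e. e \<in> O(\<lambda>n::nat. real n powr (1 / real m)) \<and>
            (\<forall>\<^sub>F n in at_top.
               pois_prod_tail m lam n =
                 (2 * pi) powr ((real m - 1) / 2) * real n powr ((real m - 1) / (2 * real m))
                 * exp (- (real n powr (1 / real m)) * ln (real n) + e n)))
       \<and> (\<lambda>n::nat. ln (pois_prod_tail m lam n) + real n powr (1 / real m) * ln (real n))
           \<in> O(\<lambda>n::nat. real n powr (1 / real m))"
proof -
  have m1: "m \<ge> 1" using assms by simp
  obtain C where C: "\<forall>\<^sub>F n in at_top. pois_prod_tail m lam n > 0 \<and>
     \<bar>ln (pois_prod_tail m lam n) + real n powr (1 / real m) * ln (real n)\<bar> \<le> C * real n powr (1 / real m)"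
    using log_bigo[of m lam] m1 assms(2) by blast
  define g where "g = (\<lambda>n::nat. ln (pois_prod_tail m lam n) + real n powr (1 / real m) * ln (real n))"
  define c1 where "c1 = ln ((2 * pi) powr ((real m - 1) / 2))"
  define \<beta> where "\<beta> = (real m - 1) / (2 * real m)"
  define e where "e = (\<lambda>n::nat. g n - c1 - \<beta> * ln (real n))"
  have \<beta>0: "\<beta> \<ge> 0" "\<beta> \<le> 1" using assms by (auto simp: \<beta>_def field_simps)
  have ev1: "\<forall>\<^sub>F n in at_top. (n::nat) \<ge> 1" by (rule eventually_ge_at_top)
  have gO: "g \<in> O(\<lambda>n::nat. real n powr (1 / real m))"
  proof (rule bigoI)
    show "\<forall>\<^sub>F n in at_top. norm (g n) \<le> C * norm (real n powr (1 / real m))"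
      using C by eventually_elim (simp add: g_def)
  qed
  have eO: "e \<in> O(\<lambda>n::nat. real n powr (1 / real m))"
  proof (rule bigoI)
    show "\<forall>\<^sub>F n in at_top. norm (e n) \<le> (C + \<bar>c1\<bar> + real m) * norm (real n powr (1 / real m))"
      using C ev1
    proof eventually_elim
      case (elim n)
      define N where "N = real n powr (1 / real m)"
      have N1: "N \<ge> 1" using elim by (simp add: N_def ge_one_powr_ge_zero)
      have lnn: "ln (real n) = real m * ln N" using m1 by (simp add: N_def)
      have lN: "ln N \<le> N" using N1 ln_le_minus_one[of N] by simp
      have ln0: "ln (real n) \<ge> 0" using elim by simp
      have "\<beta> * ln (real n) \<le> 1 * ln (real n)" using \<beta>0 ln0 by (intro mult_right_mono) auto
      also have "\<dots> \<le> real m * N" unfolding lnn using lN mult_left_mono[OF lN, of "real m"] by simp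
      finally have b1: "\<beta> * ln (real n) \<le> real m * N" by simp
      have b2: "\<beta> * ln (real n) \<ge> 0" using \<beta>0 ln0 by simp
      have b3: "\<bar>c1\<bar> \<le> \<bar>c1\<bar> * N" using N1 mult_left_mono[OF N1, of "\<bar>c1\<bar>"] by simp
      have b4: "\<bar>g n\<bar> \<le> C * N" using elim unfolding g_def N_def by simp
      have "\<bar>e n\<bar> \<le> \<bar>g n\<bar> + \<bar>c1\<bar> + \<beta> * ln (real n)" unfolding e_def using b2 by linarith
      also have "\<dots> \<le> (C + \<bar>c1\<bar> + real m) * N" using b1 b3 b4 by (simp add: algebra_simps)
      finally show ?case using N1 by (simp add: N_def)
    qed
  qed
  have eq: "\<forall>\<^sub>F n in at_top.
               pois_prod_tail m lam n =
                 (2 * pi) powr ((real m - 1) / 2) * real n powr ((real m - 1) / (2 * real m))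
                 * exp (- (real n powr (1 / real m)) * ln (real n) + e n)"
    using C ev1
  proof eventually_elim
    case (elim n)
    define P where "P = pois_prod_tail m lam n"
    have P0: "P > 0" using elim by (simp add: P_def)
    have n0: "real n > 0" using elim by simp
    have "- (real n powr (1 / real m)) * ln (real n) + e n = ln P - c1 - \<beta> * ln (real n)"
      by (simp add: e_def g_def P_def)
    hence "exp (- (real n powr (1 / real m)) * ln (real n) + e n) = P / exp c1 / exp (\<beta> * ln (real n))"
      using P0 by (simp add: exp_diff)
    also have "exp c1 = (2 * pi) powr ((real m - 1) / 2)" unfolding c1_def
      by (rule exp_ln) (simp add: pi_gt_zero)
    also have "exp (\<beta> * ln (real n)) = real n powr \<beta>" using n0 by (simp add: powr_def mult.commute)
    finally have "exp (- (real n powr (1 / real m)) * ln (real n) + e n)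
       = P / (2 * pi) powr ((real m - 1) / 2) / real n powr \<beta>" .
    thus ?case using n0 by (simp add: P_def \<beta>_def field_simps)
  qed
  show ?thesis using eO eq gO unfolding g_def by blast
qed

end
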